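(* Let $p,q,r\in(0,1/36)$, $h=8/15$, $a=3/15$, and let $K_{pqr}$ be the attractor of $\mathcal S_{pqr}=\{S_1,\dots,S_6\}$ with $S_1(x)=px$, $S_2(x)=a+rx$, $S_3(x)=h-qx$, $S_4(x)=h-r+rx$, $S_5(x)=1-a-rx$, $S_6(x)=1-r+rx$. If $S_3(K_{pqr})\cap S_4(K_{pqr})=\{h\}$, then $d=\dim_H K_{pqr}$ satisfies $p^d+q^d+4r^d=1$.
   Context: $\dim_H$ denotes Hausdorff dimension. *)

theory Defs
  imports "HOL-Analysis.Analysis"
begin

definition hcontent :: "real \<Rightarrow> real set \<Rightarrow> ennreal" where
  "hcontent s U = (if U = {} then 0
                   else if diameter U = 0 then (if s = 0 then 1 else 0)
                   else ennreal (diameter U powr s))"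

definition hausdorff_delta :: "real \<Rightarrow> real \<Rightarrow> real set \<Rightarrow> ennreal" where
  "hausdorff_delta s \<delta> A =
     (INF U \<in> {U :: nat \<Rightarrow> real set. A \<subseteq> (\<Union>i. U i) \<and> (\<forall>i. bounded (U i) \<and> diameter (U i) \<le> \<delta>)}.
        (\<Sum>i. hcontent s (U i)))"

definition hausdorff_measure :: "real \<Rightarrow> real set \<Rightarrow> ennreal" where
  "hausdorff_measure s A = (SUP \<delta> \<in> {0<..}. hausdorff_delta s \<delta> A)"

definition hausdorff_dim :: "real set \<Rightarrow> real" where
  "hausdorff_dim A = Inf {s. 0 \<le> s \<and> hausdorff_measure s A = 0}"

text \<open>K is the attractor of the IFS {S_i | i in I}: the nonempty compact set with
  K = union of the S_i(K) (unique by Hutchinson's theorem for contractions).\<close>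

definition is_attractor :: "(nat \<Rightarrow> real \<Rightarrow> real) \<Rightarrow> nat set \<Rightarrow> real set \<Rightarrow> bool" where
  "is_attractor S I K \<longleftrightarrow> K \<noteq> {} \<and> compact K \<and> K = (\<Union>i\<in>I. S i ` K)"

end

theory Submission
  imports Defs
begin



fun tw :: "('j \<Rightarrow> real \<Rightarrow> real) \<Rightarrow> 'j list \<Rightarrow> real \<Rightarrow> real" where
  "tw T [] = id"
| "tw T (j # u) = T j \<circ> tw T u"

definition rw :: "('j \<Rightarrow> real) \<Rightarrow> 'j list \<Rightarrow> real" where
  "rw \<rho> u = prod_list (map \<rho> u)"

lemma tw_append: "tw T (u @ v) = tw T u \<circ> tw T v"
  by (induction u) auto

lemma rw_simps[simp]: "rw \<rho> [] = 1" "rw \<rho> (j#u) = \<rho> j * rw \<rho> u" "rw \<rho> (u@v) = rw \<rho> u * rw \<rho> v"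
  by (auto simp: rw_def)

definition words :: "'j set \<Rightarrow> nat \<Rightarrow> 'j list set" where
  "words A n = {w. set w \<subseteq> A \<and> length w = n}"

lemma words_0: "words A 0 = {[]}"
  by (auto simp: words_def)

lemma words_Suc: "words A (Suc n) = (\<lambda>(x,w). x#w) ` (A \<times> words A n)"
  by (auto simp: words_def length_Suc_conv image_iff)

lemma finite_words: "finite A \<Longrightarrow> finite (words A n)"
  unfolding words_def by (rule finite_lists_length_eq)

lemma sum_words:
  fixes f :: "'j \<Rightarrow> real"
  assumes "finite A"
  shows "(\<Sum>w\<in>words A n. prod_list (map f w)) = (sum f A)^n"
proof (induction n)
  case 0 then show ?case by (simp add: words_0)
next
  case (Suc n)
  have inj: "inj_on (\<lambda>(x,w). x#w) (A \<times> words A n)" by (auto simp: inj_on_def)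
  have "(\<Sum>w\<in>words A (Suc n). prod_list (map f w)) = (\<Sum>(x,w)\<in>A \<times> words A n. f x * prod_list (map f w))"
    unfolding words_Suc by (subst sum.reindex[OF inj]) (simp add: case_prod_unfold)
  also have "\<dots> = (\<Sum>x\<in>A. \<Sum>w\<in>words A n. f x * prod_list (map f w))"
    by (rule sum.cartesian_product[symmetric])
  also have "\<dots> = (\<Sum>x\<in>A. f x * (sum f A)^n)"
    by (simp add: sum_distrib_left[symmetric] Suc.IH)
  also have "\<dots> = (sum f A)^(Suc n)" by (simp add: sum_distrib_right[symmetric])
  finally show ?case .
qed

lemma words_append_eq:
  assumes "set u \<subseteq> A" "length u \<le> L"
  shows "{w \<in> words A L. take (length u) w = u} = (\<lambda>v. u @ v) ` words A (L - length u)"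
proof (rule set_eqI, rule iffI)
  fix w assume "w \<in> {w \<in> words A L. take (length u) w = u}"
  then have w: "set w \<subseteq> A" "length w = L" "take (length u) w = u" by (auto simp: words_def)
  then have "w = u @ drop (length u) w" by (metis append_take_drop_id)
  moreover have "drop (length u) w \<in> words A (L - length u)"
    using w by (auto simp: words_def dest: in_set_dropD)
  ultimately show "w \<in> (\<lambda>v. u @ v) ` words A (L - length u)" by blast
next
  fix w assume "w \<in> (\<lambda>v. u @ v) ` words A (L - length u)"
  then show "w \<in> {w \<in> words A L. take (length u) w = u}"
    using assms by (auto simp: words_def)
qed

lemma tw_sim:
  assumes "\<And>j x y. j \<in> J \<Longrightarrow> \<bar>T j x - T j y\<bar> = \<rho> j * \<bar>x - y\<bar>" "set u \<subseteq> J"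
  shows "\<bar>tw T u x - tw T u y\<bar> = rw \<rho> u * \<bar>x - y\<bar>"
  using assms(2) by (induction u arbitrary: x y) (auto simp: assms(1))

lemma tw_inv:
  assumes "\<And>j. j \<in> J \<Longrightarrow> T j ` K \<subseteq> K" "set u \<subseteq> J"
  shows "tw T u ` K \<subseteq> K"
  using assms(2) proof (induction u)
  case Nil then show ?case by simp
next
  case (Cons j u)
  then have "tw T u ` K \<subseteq> K" "j \<in> J" by auto
  then show ?case using assms(1)[of j] by (auto simp: image_comp[symmetric])
qed

lemma rw_bounds:
  assumes "\<And>j. j \<in> J \<Longrightarrow> 0 < \<rho> j \<and> \<rho> j \<le> m" "set u \<subseteq> J"
  shows "0 < rw \<rho> u \<and> rw \<rho> u \<le> m ^ length u"
  using assms(2) proof (induction u)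
  case Nil then show ?case by simp
next
  case (Cons j u)
  then have a: "0 < \<rho> j" "\<rho> j \<le> m" "0 < rw \<rho> u" "rw \<rho> u \<le> m ^ length u" using assms(1) by auto
  then show ?case by (auto intro: mult_mono)
qed

lemma split_words:
  assumes "take (length u) v \<noteq> u" "take (length v) u \<noteq> v"
  shows "\<exists>c j k u' v'. u = c @ j # u' \<and> v = c @ k # v' \<and> j \<noteq> k"
  using assms proof (induction u arbitrary: v)
  case Nil then show ?case by simp
next
  case (Cons a u)
  then obtain b v' where v: "v = b # v'" by (cases v) auto
  show ?case
  proof (cases "a = b")
    case True
    then have "take (length u) v' \<noteq> u" "take (length v') u \<noteq> v'" using Cons.prems v by auto
    then obtain c j k u'' v'' where "u = c @ j # u''" "v' = c @ k # v''" "j \<noteq> k" using Cons.IH by blast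
    then show ?thesis using v True by (metis append_Cons)
  next
    case False
    then show ?thesis using v by (metis append_Nil)
  qed
qed

lemma card_sep:
  fixes P :: "real set"
  assumes "finite P" "\<And>a b. a \<in> P \<Longrightarrow> b \<in> P \<Longrightarrow> a \<noteq> b \<Longrightarrow> e \<le> \<bar>a - b\<bar>" "e > 0"
    "P \<subseteq> {lo..hi}" "lo \<le> hi"
  shows "real (card P) \<le> (hi - lo) / e + 1"
  using assms proof (induction "card P" arbitrary: P hi)
  case 0 then show ?case by (simp add: divide_nonneg_pos)
next
  case (Suc n)
  then have ne: "P \<noteq> {}" by auto
  define m where "m = Max P"
  have mP: "m \<in> P" using Suc.prems ne by (simp add: m_def)
  have le: "\<And>x. x \<in> P \<Longrightarrow> x \<le> m" using Suc.prems by (simp add: m_def)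
  define P' where "P' = P - {m}"
  have cP': "card P' = n" using Suc.hyps(2) mP by (simp add: P'_def card_Diff_singleton Suc.prems)
  show ?case
  proof (cases "P' = {}")
    case True
    then have "card P = 1" using cP' Suc.hyps(2) by auto
    then show ?thesis using Suc.prems by (simp add: divide_nonneg_pos)
  next
    case False
    have sub: "P' \<subseteq> {lo..m - e}"
    proof
      fix x assume x: "x \<in> P'"
      then have "x \<le> m" "x \<noteq> m" "x \<in> P" using le by (auto simp: P'_def)
      then have "e \<le> \<bar>x - m\<bar>" using Suc.prems(2)[of x m] mP by auto
      then show "x \<in> {lo..m - e}" using \<open>x \<le> m\<close> \<open>x \<in> P\<close> Suc.prems(4) by auto
    qed
    then have "lo \<le> m - e" using False by auto
    then have "real (card P') \<le> (m - e - lo) / e + 1"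
      using Suc.hyps(1)[of P' "m - e"] cP' sub Suc.prems by (auto simp: P'_def)
    moreover have "m \<le> hi" using mP Suc.prems(4) by auto
    moreover have "(m - e - lo) / e + 1 = (m - lo)/e" using Suc.prems(3) by (simp add: field_simps)
    ultimately have "real (card P') \<le> (hi - lo)/e"
      using Suc.prems(3) by (smt (verit) divide_right_mono)
    then show ?thesis using cP' Suc.hyps(2) by simp
  qed
qed



locale ssep =
  fixes K :: "real set" and J :: "'j set" and T :: "'j \<Rightarrow> real \<Rightarrow> real"
    and \<rho> :: "'j \<Rightarrow> real" and t :: real
  assumes K: "compact K" "K \<noteq> {}"
  and J: "finite J" "J \<noteq> {}"
  and rho: "\<And>j. j\<in>J \<Longrightarrow> 0 < \<rho> j \<and> \<rho> j < 1"
  and sim: "\<And>j x y. j\<in>J \<Longrightarrow> \<bar>T j x - T j y\<bar> = \<rho> j * \<bar>x - y\<bar>"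
  and inv: "\<And>j. j \<in> J \<Longrightarrow> T j ` K \<subseteq> K"
  and disj: "\<And>j k. j\<in>J \<Longrightarrow> k\<in>J \<Longrightarrow> j\<noteq>k \<Longrightarrow> T j ` K \<inter> T k ` K = {}"
  and t: "t > 0"
  and sumge: "(\<Sum>j\<in>J. \<rho> j powr t) \<ge> 1"
begin

lemma cont_T: "j \<in> J \<Longrightarrow> continuous_on UNIV (T j)"
proof -
  assume j: "j \<in> J"
  show ?thesis unfolding continuous_on_iff
  proof (intro ballI allI impI)
    fix x e :: real assume "0 < e"
    show "\<exists>d>0. \<forall>x'\<in>UNIV. dist x' x < d \<longrightarrow> dist (T j x') (T j x) < e"
    proof (intro exI[of _ e] conjI ballI impI)
      fix x' assume "dist x' x < e"
      have "\<rho> j * \<bar>x' - x\<bar> \<le> \<bar>x' - x\<bar>" using rho[OF j] by (intro mult_left_le_one_le) auto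
      then show "dist (T j x') (T j x) < e"
        using sim[OF j, of x' x] \<open>dist x' x < e\<close> unfolding dist_real_def by linarith
    qed fact
  qed
qed

lemma compact_TK: "j \<in> J \<Longrightarrow> compact (T j ` K)"
  using cont_T K(1) by (meson compact_continuous_image continuous_on_subset subset_UNIV)

lemma sep: "\<exists>g>0. \<forall>j\<in>J. \<forall>k\<in>J. j\<noteq>k \<longrightarrow> (\<forall>a\<in>T j ` K. \<forall>b\<in>T k ` K. g \<le> \<bar>a - b\<bar>)"
proof -
  have "\<forall>jk\<in>{jk\<in>J\<times>J. fst jk \<noteq> snd jk}. \<exists>d>0. \<forall>a\<in>T (fst jk) ` K. \<forall>b\<in>T (snd jk) ` K. d \<le> dist a b"
  proof
    fix jk assume "jk \<in> {jk\<in>J\<times>J. fst jk \<noteq> snd jk}"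
    then have "fst jk \<in> J" "snd jk \<in> J" "fst jk \<noteq> snd jk" by auto
    then show "\<exists>d>0. \<forall>a\<in>T (fst jk) ` K. \<forall>b\<in>T (snd jk) ` K. d \<le> dist a b"
      using compact_TK disj by (intro separate_compact_closed) (auto intro: compact_imp_closed)
  qed
  from bchoice[OF this] obtain d where d0: "\<forall>jk \<in> {jk\<in>J\<times>J. fst jk \<noteq> snd jk}. d jk > 0 \<and>
      (\<forall>a\<in>T (fst jk) ` K. \<forall>b\<in>T (snd jk) ` K. d jk \<le> dist a b)"
    by blast
  note d = d0[rule_format]
  define P where "P = {jk\<in>J\<times>J. fst jk \<noteq> snd jk}"
  have fP: "finite P" using J by (simp add: P_def)
  define g where "g = Min (insert 1 (d ` P))"
  have "g > 0" unfolding g_def using fP d by (subst Min_gr_iff) (auto simp: P_def)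
  moreover have "g \<le> \<bar>a - b\<bar>" if "j\<in>J" "k\<in>J" "j\<noteq>k" "a \<in> T j ` K" "b \<in> T k ` K" for j k a b
  proof -
    have jk: "(j,k) \<in> P" using that by (auto simp: P_def)
    then have "g \<le> d (j,k)" using fP by (auto simp: g_def)
    also have "d (j,k) \<le> dist a b" using d[of "(j,k)"] jk that by (auto simp: P_def)
    finally show ?thesis by (simp add: dist_real_def)
  qed
  ultimately show ?thesis by blast
qed

abbreviation "C u \<equiv> tw T u ` K"

lemma C_sub: "set u \<subseteq> J \<Longrightarrow> C u \<subseteq> K"
  by (rule tw_inv[OF inv])

lemma C_mono: assumes "set (u @ v) \<subseteq> J" shows "C (u @ v) \<subseteq> C u"
proof -
  have "C v \<subseteq> K" using C_sub[of v] assms by simp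
  then have "tw T u ` C v \<subseteq> C u" by (rule image_mono)
  then show ?thesis by (simp add: tw_append image_comp)
qed

lemma rho_le1: "\<And>j. j\<in>J \<Longrightarrow> 0<\<rho> j \<and> \<rho> j \<le> 1" using rho by (simp add: less_imp_le)

lemma rw_01: assumes "set u \<subseteq> J" shows "0 < rw \<rho> u \<and> rw \<rho> u \<le> 1"
proof -
  have "0 < rw \<rho> u \<and> rw \<rho> u \<le> 1 ^ length u" by (rule rw_bounds[OF rho_le1 assms])
  then show ?thesis by simp
qed

lemma rw_pos: "set u \<subseteq> J \<Longrightarrow> 0 < rw \<rho> u"
  using rw_01 by blast

lemma rw_le1: "set u \<subseteq> J \<Longrightarrow> rw \<rho> u \<le> 1"
  using rw_01 by blast


lemma not_prefix_aux:
  assumes "set v \<subseteq> J" "take (length u) v = u" "u \<noteq> v" "rw \<rho> u \<le> d" "v = [] \<or> d < rw \<rho> (butlast v)"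
  shows False
proof -
  have lt: "length u < length v"
  proof (rule ccontr)
    assume "\<not> length u < length v"
    then have "take (length u) v = v" by simp
    then show False using assms(2,3) by simp
  qed
  define z where "z = drop (length u) v"
  have "v = take (length u) v @ drop (length u) v" by (rule append_take_drop_id[symmetric])
  then have v: "v = u @ z" unfolding z_def assms(2) .
  have zne: "z \<noteq> []" using lt by (simp add: z_def)
  then have "v \<noteq> []" using v by simp
  have bl: "butlast v = u @ butlast z" using v zne by (simp add: butlast_append)
  have "set (butlast z) \<subseteq> J" using assms(1) v by (auto dest: in_set_butlastD)
  then have "rw \<rho> (butlast z) \<le> 1" by (rule rw_le1)
  moreover have "0 < rw \<rho> u" using assms(1) v by (intro rw_pos) auto
  ultimately have "rw \<rho> (butlast v) \<le> rw \<rho> u" unfolding bl rw_simps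
    by (simp add: mult_left_le)
  then show False using assms(4,5) \<open>v \<noteq> []\<close> by linarith
qed

lemma lowerB:
  "\<exists>c0>0. \<forall>(F :: nat set) x R. finite F \<and> (\<forall>i\<in>F. R i > 0) \<and> K \<subseteq> (\<Union>i\<in>F. ball (x i) (R i))
      \<longrightarrow> c0 \<le> (\<Sum>i\<in>F. (2 * R i) powr t)"
proof -
  obtain g where g: "g > 0"
    "\<And>j k a b. j\<in>J \<Longrightarrow> k\<in>J \<Longrightarrow> j\<noteq>k \<Longrightarrow> a \<in> T j ` K \<Longrightarrow> b \<in> T k ` K \<Longrightarrow> g \<le> \<bar>a - b\<bar>"
    using sep by blast
  define c0 where "c0 = 1 / (1/g + 1)"
  have c0pos: "c0 > 0" using g(1) unfolding c0_def by (simp add: add_pos_pos)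
  have main: "c0 \<le> (\<Sum>i\<in>F. (2 * R i) powr t)"
    if F: "finite F" and R: "\<And>i. i \<in> F \<Longrightarrow> R i > 0" and cov: "K \<subseteq> (\<Union>i\<in>F. ball (x i) (R i))" for F x R
  proof -
    define V where "V i = ball (x i) (R i)" for i
    define d where "d i = 2 * R i" for i
    have dpos: "\<And>i. i \<in> F \<Longrightarrow> d i > 0" using R by (simp add: d_def)
    have Fne: "F \<noteq> {}" using cov K(2) by auto
    have covV: "K \<subseteq> \<Union>(V ` F)" using cov by (simp add: V_def)
    have opn: "\<And>G. G \<in> V ` F \<Longrightarrow> open G" by (auto simp: V_def)
    obtain e where e: "e > 0" "\<And>y. y \<in> K \<Longrightarrow> \<exists>G \<in> V ` F. ball y e \<subseteq> G"
      using Heine_Borel_lemma[OF K(1) covV opn] by blast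
    define m where "m = Max (\<rho> ` J)"
    have mJ: "m \<in> \<rho> ` J" unfolding m_def using J by simp
    have m12: "0 < m \<and> m < 1" using mJ rho by blast
    have m3: "\<And>j. j\<in>J \<Longrightarrow> \<rho> j \<le> m" unfolding m_def using J(1) by simp
    have m: "0 < m" "m < 1" "\<And>j. j\<in>J \<Longrightarrow> \<rho> j \<le> m" using m12 m3 by auto
    have rwm: "\<And>u. set u \<subseteq> J \<Longrightarrow> rw \<rho> u \<le> m ^ length u"
    proof -
      fix u :: "'j list" assume "set u \<subseteq> J"
      have h: "0 < \<rho> j \<and> \<rho> j \<le> m" if "j \<in> J" for j using m(3)[OF that] rho[OF that] by blast
      from rw_bounds[of J \<rho> m u, OF h \<open>set u \<subseteq> J\<close>] show "rw \<rho> u \<le> m ^ length u" by blast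
    qed
    define D where "D = diameter K"
    have D: "\<And>a b. a \<in> K \<Longrightarrow> b \<in> K \<Longrightarrow> \<bar>a - b\<bar> \<le> D"
      unfolding D_def using diameter_bounded_bound[OF compact_imp_bounded[OF K(1)]]
      by (metis dist_real_def)
    obtain a0 where "a0 \<in> K" using K(2) by blast
    then have "\<bar>a0 - a0\<bar> \<le> D" by (intro D)
    then have D0: "D \<ge> 0" by simp
    define dmin where "dmin = Min (d ` F)"
    have fdF: "finite (d ` F)" using F by simp
    have dmin1: "dmin > 0" unfolding dmin_def using fdF Fne dpos by (subst Min_gr_iff) auto
    have dmin2: "dmin \<le> d i" if "i \<in> F" for i unfolding dmin_def using fdF that by simp
    note dmin = dmin1 dmin2
    have "0 < min (e/(D+1)) dmin" using e(1) D0 dmin(1) by simp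
    then obtain L where L: "m^L < min (e/(D+1)) dmin" using real_arch_pow_inv m by blast
    have mLe: "m^L * D < e"
    proof -
      have "m^L * D \<le> m^L * (D+1)" using m(1) by (intro mult_left_mono) auto
      also have "\<dots> < e/(D+1) * (D+1)" using L D0 by (intro mult_strict_right_mono) auto
      also have "\<dots> = e" using D0 by simp
      finally show ?thesis .
    qed
    define Cut where "Cut i = {u. set u \<subseteq> J \<and> length u \<le> L \<and> rw \<rho> u \<le> d i \<and>
        (u = [] \<or> d i < rw \<rho> (butlast u)) \<and> C u \<inter> V i \<noteq> {}}" for i
    have finCut: "finite (Cut i)" for i
      by (rule finite_subset[OF _ finite_lists_length_le[OF J(1), of L]]) (auto simp: Cut_def)
    have cover: "\<exists>i\<in>F. \<exists>u\<in>Cut i. take (length u) w = u" if w: "w \<in> words J L" for w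
    proof -
      have wJ: "set w \<subseteq> J" and lw: "length w = L" using w by (auto simp: words_def)
      have "C w \<noteq> {}" using K(2) by simp
      then obtain y0 where y0: "y0 \<in> C w" by blast
      then have "y0 \<in> K" using C_sub[OF wJ] by blast
      then obtain i where i: "i \<in> F" "ball y0 e \<subseteq> V i" using e(2) by blast
      have CwV: "C w \<subseteq> V i"
      proof
        fix z assume "z \<in> C w"
        then obtain a where a: "a \<in> K" "z = tw T w a" by blast
        obtain b where b: "b \<in> K" "y0 = tw T w b" using y0 by blast
        have "\<bar>z - y0\<bar> = rw \<rho> w * \<bar>a - b\<bar>" using tw_sim[OF sim wJ] a b by simp
        also have "\<dots> \<le> m^L * D"
          using rwm[OF wJ] lw D[OF a(1) b(1)] rw_pos[OF wJ] m(1)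
          by (intro mult_mono) auto
        finally have "dist z y0 < e" using mLe by (simp add: dist_real_def)
        then show "z \<in> V i" using i(2) by (auto simp: dist_commute)
      qed
      define k where "k = (LEAST k. rw \<rho> (take k w) \<le> d i)"
      have exk: "rw \<rho> (take L w) \<le> d i"
        using rwm[OF wJ] lw L dmin(2)[OF i(1)] by simp
      have kL: "k \<le> L" unfolding k_def by (rule Least_le[where P="\<lambda>k. rw \<rho> (take k w) \<le> d i", OF exk])
      have rk: "rw \<rho> (take k w) \<le> d i" unfolding k_def by (rule LeastI[where P="\<lambda>k. rw \<rho> (take k w) \<le> d i", OF exk])
      define u where "u = take k w"
      have uJ: "set u \<subseteq> J" using wJ by (auto simp: u_def dest: in_set_takeD)
      have lu: "length u = k" using kL lw by (simp add: u_def)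
      have bl: "u = [] \<or> d i < rw \<rho> (butlast u)"
      proof (cases "k = 0")
        case True then show ?thesis by (simp add: u_def)
      next
        case False
        have "k - 1 < k" using False by simp
        have "butlast u = take (k - 1) w" unfolding u_def using kL lw by (simp add: butlast_take)
        moreover have "\<not> rw \<rho> (take (k-1) w) \<le> d i"
          using not_less_Least[of "k-1" "\<lambda>k. rw \<rho> (take k w) \<le> d i"] \<open>k - 1 < k\<close> unfolding k_def[symmetric] by blast
        ultimately show ?thesis by simp
      qed
      have "w = u @ drop k w" by (simp add: u_def)
      then have "C w \<subseteq> C u" using C_mono[of u "drop k w"] wJ by simp
      then have "C u \<inter> V i \<noteq> {}" using CwV \<open>C w \<noteq> {}\<close> by blast
      moreover have "rw \<rho> u \<le> d i" using rk by (simp add: u_def)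
      ultimately have "u \<in> Cut i" using uJ lu kL bl unfolding Cut_def by simp
      moreover have "take (length u) w = u" using lu by (simp add: u_def)
      ultimately show ?thesis using i(1) by blast
    qed
    define lam where "lam = (\<Sum>j\<in>J. \<rho> j powr t)"
    have lam: "lam \<ge> 1" using sumge by (simp add: lam_def)
    define \<nu> where "\<nu> j = \<rho> j powr t / lam" for j
    define \<mu> where "\<mu> u = prod_list (map \<nu> u)" for u
    have sum\<nu>: "sum \<nu> J = 1" using lam by (simp add: \<nu>_def lam_def sum_divide_distrib[symmetric])
    have \<mu>_words: "(\<Sum>w\<in>words J n. \<mu> w) = 1" for n
      unfolding \<mu>_def using sum_words[OF J(1), of \<nu> n] sum\<nu> by simp
    have \<nu>_nonneg: "\<nu> j \<ge> 0" for j using lam by (simp add: \<nu>_def)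
    have \<mu>_nonneg: "\<mu> u \<ge> 0" for u
      unfolding \<mu>_def by (induction u) (simp_all add: \<nu>_nonneg)
    have \<mu>_le: "\<mu> u \<le> (rw \<rho> u) powr t" if "set u \<subseteq> J" for u
      using that proof (induction u)
      case Nil then show ?case by (simp add: \<mu>_def)
    next
      case (Cons j u)
      then have ju: "j \<in> J" "set u \<subseteq> J" by auto
      have "\<rho> j powr t / lam \<le> \<rho> j powr t / 1"
        using lam by (intro divide_left_mono) auto
      then have "\<nu> j \<le> \<rho> j powr t" unfolding \<nu>_def by simp
      moreover have "\<mu> u \<le> rw \<rho> u powr t" using Cons ju by simp
      ultimately have "\<nu> j * \<mu> u \<le> \<rho> j powr t * rw \<rho> u powr t"
        using \<mu>_nonneg by (intro mult_mono) auto
      also have "\<dots> = (\<rho> j * rw \<rho> u) powr t"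
        using rho[OF ju(1)] rw_pos[OF ju(2)] by (simp add: powr_mult)
      finally show ?case by (simp add: \<mu>_def)
    qed
    have \<mu>_ext: "(\<Sum>w\<in>{w\<in>words J L. take (length u) w = u}. \<mu> w) = \<mu> u"
      if "set u \<subseteq> J" "length u \<le> L" for u
    proof -
      have inj: "inj_on (\<lambda>v. u @ v) (words J (L - length u))" by (auto simp: inj_on_def)
      have "(\<Sum>w\<in>{w\<in>words J L. take (length u) w = u}. \<mu> w) = (\<Sum>v\<in>words J (L - length u). \<mu> (u @ v))"
        unfolding words_append_eq[OF that] by (rule sum.reindex[OF inj, unfolded comp_def])
      also have "\<dots> = (\<Sum>v\<in>words J (L - length u). \<mu> u * \<mu> v)" by (simp add: \<mu>_def)
      also have "\<dots> = \<mu> u" by (simp add: sum_distrib_left[symmetric] \<mu>_words)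
      finally show ?thesis .
    qed
    have cardCut: "real (card (Cut i)) \<le> 1/g + 1" if i: "i \<in> F" for i
    proof -
      define pt where "pt u = (SOME z. z \<in> C u \<inter> V i)" for u
      have pt: "pt u \<in> C u \<inter> V i" if "u \<in> Cut i" for u
      proof -
        have "\<exists>z. z \<in> C u \<inter> V i" using that unfolding Cut_def by blast
        then show ?thesis unfolding pt_def by (rule someI_ex)
      qed
      have far: "g * d i < \<bar>pt u - pt v\<bar>" if u: "u \<in> Cut i" and v: "v \<in> Cut i" and uv: "u \<noteq> v" for u v
      proof -
        have uJ: "set u \<subseteq> J" and ru: "rw \<rho> u \<le> d i" and bu: "u = [] \<or> d i < rw \<rho> (butlast u)"
          using u unfolding Cut_def by auto
        have vJ: "set v \<subseteq> J" and rv: "rw \<rho> v \<le> d i" and bv: "v = [] \<or> d i < rw \<rho> (butlast v)"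
          using v unfolding Cut_def by auto
        have n1: "take (length u) v \<noteq> u" using not_prefix_aux[OF vJ _ uv ru bv] by blast
        have n2: "take (length v) u \<noteq> v" using not_prefix_aux[OF uJ _ uv[symmetric] rv bu] by blast
        obtain c j k u' v' where uc: "u = c @ j # u'" and vc: "v = c @ k # v'" and jk: "j \<noteq> k"
          using split_words[OF n1 n2] by blast
        have cJ: "set c \<subseteq> J" "j \<in> J" "k \<in> J" "set u' \<subseteq> J" "set v' \<subseteq> J"
          using uJ vJ unfolding uc vc by auto
        have bl: "butlast u = c @ butlast (j # u')" unfolding uc by (simp add: butlast_append)
        have "set (butlast (j # u')) \<subseteq> J" using cJ by (auto dest: in_set_butlastD)
        then have "rw \<rho> (butlast (j # u')) \<le> 1" by (rule rw_le1)
        then have "rw \<rho> (butlast u) \<le> rw \<rho> c" unfolding bl rw_simps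
          using rw_pos[OF cJ(1)] by (simp add: mult_left_le)
        moreover have "u \<noteq> []" using uc by simp
        ultimately have dc: "d i < rw \<rho> c" using bu by auto
        have "pt u \<in> C u" using pt[OF u] by blast
        then obtain y where y: "y \<in> K" "pt u = tw T c (T j (tw T u' y))"
          unfolding uc by (auto simp: tw_append)
        have "tw T u' y \<in> K" using C_sub[OF cJ(4)] y(1) by blast
        then have a'K: "T j (tw T u' y) \<in> T j ` K" by blast
        have "pt v \<in> C v" using pt[OF v] by blast
        then obtain z where z: "z \<in> K" "pt v = tw T c (T k (tw T v' z))"
          unfolding vc by (auto simp: tw_append)
        have "tw T v' z \<in> K" using C_sub[OF cJ(5)] z(1) by blast
        then have b'K: "T k (tw T v' z) \<in> T k ` K" by blast
        have gab: "g \<le> \<bar>T j (tw T u' y) - T k (tw T v' z)\<bar>"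
          by (rule g(2)[OF cJ(2) cJ(3) jk a'K b'K])
        have eq: "\<bar>pt u - pt v\<bar> = rw \<rho> c * \<bar>T j (tw T u' y) - T k (tw T v' z)\<bar>"
          unfolding y(2) z(2) by (rule tw_sim[OF sim cJ(1)])
        have "g * d i < g * rw \<rho> c" using g(1) dc by simp
        also have "\<dots> \<le> rw \<rho> c * \<bar>T j (tw T u' y) - T k (tw T v' z)\<bar>"
          using gab rw_pos[OF cJ(1)] by (simp add: mult.commute)
        finally show ?thesis unfolding eq .
      qed
      have gd: "0 < g * d i" using g(1) dpos[OF i] by simp
      have inj: "inj_on pt (Cut i)"
      proof (rule inj_onI)
        fix u v assume "u \<in> Cut i" "v \<in> Cut i" "pt u = pt v"
        then show "u = v" using far gd by force
      qed
      have "real (card (Cut i)) = real (card (pt ` Cut i))" using card_image[OF inj] by simp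
      also have "\<dots> \<le> ((x i + R i) - (x i - R i)) / (g * d i) + 1"
      proof (rule card_sep)
        show "finite (pt ` Cut i)" using finCut by simp
        show "0 < g * d i" by (rule gd)
        show "x i - R i \<le> x i + R i" using R[OF i] by simp
        show "pt ` Cut i \<subseteq> {x i - R i..x i + R i}"
        proof
          fix a assume "a \<in> pt ` Cut i"
          then obtain u where "u \<in> Cut i" "a = pt u" by blast
          then have "a \<in> V i" using pt by blast
          then show "a \<in> {x i - R i..x i + R i}" by (auto simp: V_def dist_real_def)
        qed
        fix a b assume "a \<in> pt ` Cut i" "b \<in> pt ` Cut i" "a \<noteq> b"
        then obtain u v where "u \<in> Cut i" "v \<in> Cut i" "a = pt u" "b = pt v" "u \<noteq> v" by blast
        then show "g * d i \<le> \<bar>a - b\<bar>" using far by force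
      qed
      also have "\<dots> = 1/g + 1" using R[OF i] g(1) by (simp add: d_def field_simps)
      finally show ?thesis .
    qed
    have sumCut: "(\<Sum>u\<in>Cut i. \<mu> u) \<le> (1/g+1) * d i powr t" if i: "i \<in> F" for i
    proof -
      have "(\<Sum>u\<in>Cut i. \<mu> u) \<le> (\<Sum>u\<in>Cut i. d i powr t)"
      proof (rule sum_mono)
        fix u assume u: "u \<in> Cut i"
        then have uJ: "set u \<subseteq> J" and "rw \<rho> u \<le> d i" by (auto simp: Cut_def)
        then have "rw \<rho> u powr t \<le> d i powr t"
          using rw_pos[OF uJ] t by (intro powr_mono2) auto
        then show "\<mu> u \<le> d i powr t" using \<mu>_le[OF uJ] by linarith
      qed
      also have "\<dots> = real (card (Cut i)) * d i powr t" by simp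
      also have "\<dots> \<le> (1/g+1) * d i powr t"
        using cardCut[OF i] by (intro mult_right_mono) auto
      finally show ?thesis .
    qed
    have fw: "finite (words J L)" by (rule finite_words[OF J(1)])
    have "1 = (\<Sum>w\<in>words J L. \<mu> w)" by (simp add: \<mu>_words)
    also have "\<dots> \<le> (\<Sum>w\<in>words J L. \<Sum>i\<in>F. \<Sum>u\<in>{u\<in>Cut i. take (length u) w = u}. \<mu> w)"
    proof (rule sum_mono)
      fix w assume w: "w \<in> words J L"
      obtain i u where iu: "i \<in> F" "u \<in> Cut i" "take (length u) w = u" using cover[OF w] by blast
      have fin2: "finite {u\<in>Cut i. take (length u) w = u}" by (rule finite_subset[OF _ finCut[of i]]) auto
      have "\<mu> w \<le> (\<Sum>u\<in>{u\<in>Cut i. take (length u) w = u}. \<mu> w)"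
        using member_le_sum[of u "{u\<in>Cut i. take (length u) w = u}" "\<lambda>_. \<mu> w"] iu fin2 \<mu>_nonneg[of w]
        by blast
      also have "\<dots> \<le> (\<Sum>i\<in>F. \<Sum>u\<in>{u\<in>Cut i. take (length u) w = u}. \<mu> w)"
        using member_le_sum[of i F "\<lambda>i. \<Sum>u\<in>{u\<in>Cut i. take (length u) w = u}. \<mu> w"] iu(1) F \<mu>_nonneg[of w]
        by (simp add: sum_nonneg)
      finally show "\<mu> w \<le> (\<Sum>i\<in>F. \<Sum>u\<in>{u\<in>Cut i. take (length u) w = u}. \<mu> w)" .
    qed
    also have "\<dots> = (\<Sum>i\<in>F. \<Sum>w\<in>words J L. \<Sum>u\<in>{u\<in>Cut i. take (length u) w = u}. \<mu> w)"
      by (rule sum.swap)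
    also have "\<dots> = (\<Sum>i\<in>F. \<Sum>u\<in>Cut i. \<Sum>w\<in>{w\<in>words J L. take (length u) w = u}. \<mu> w)"
      using fw finCut by (intro sum.cong refl sum.swap_restrict)
    also have "\<dots> = (\<Sum>i\<in>F. \<Sum>u\<in>Cut i. \<mu> u)"
      by (intro sum.cong refl \<mu>_ext) (auto simp: Cut_def)
    also have "\<dots> \<le> (\<Sum>i\<in>F. (1/g+1) * d i powr t)"
      by (intro sum_mono sumCut)
    also have "\<dots> = (1/g+1) * (\<Sum>i\<in>F. (2 * R i) powr t)"
      by (simp add: sum_distrib_left d_def)
    finally have "1 \<le> (1/g+1) * (\<Sum>i\<in>F. (2 * R i) powr t)" .
    moreover have "1/g + 1 > 0" using g(1) by (simp add: add_pos_pos)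
    ultimately show ?thesis unfolding c0_def by (simp add: field_simps)
  qed
  show ?thesis
  proof (intro exI[of _ c0] conjI allI impI)
    fix F :: "nat set" and x R
    assume "finite F \<and> (\<forall>i\<in>F. R i > 0) \<and> K \<subseteq> (\<Union>i\<in>F. ball (x i) (R i))"
    then show "c0 \<le> (\<Sum>i\<in>F. (2 * R i) powr t)" using main[of F R x] by blast
  qed (rule c0pos)
qed


lemma geo_sum_le: "finite F \<Longrightarrow> (\<Sum>i\<in>F. (1/2::real)^(Suc i)) \<le> 1"
  using sum_le_suminf[OF sums_summable[OF power_half_series], of F] sums_unique[OF power_half_series]
  by simp

lemma hd_lower: "\<exists>c>0. \<forall>\<delta>. ennreal c \<le> hausdorff_delta t \<delta> K"
proof -
  obtain c0 where c0: "c0 > 0" and main: "\<And>(F :: nat set) x R. finite F \<Longrightarrow> (\<And>i. i \<in> F \<Longrightarrow> R i > 0) \<Longrightarrow>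
      K \<subseteq> (\<Union>i\<in>F. ball (x i) (R i)) \<Longrightarrow> c0 \<le> (\<Sum>i\<in>F. (2 * R i) powr t)"
  proof -
    obtain c1 where "c1 > 0" and m: "\<forall>(F :: nat set) x R. finite F \<and> (\<forall>i\<in>F. R i > 0) \<and> K \<subseteq> (\<Union>i\<in>F. ball (x i) (R i))
      \<longrightarrow> c1 \<le> (\<Sum>i\<in>F. (2 * R i) powr t)" using lowerB by blast
    have mm: "c1 \<le> (\<Sum>i\<in>F. (2 * R i) powr t)" if "finite F" "\<And>i. i \<in> F \<Longrightarrow> R i > 0"
      "K \<subseteq> (\<Union>i\<in>F. ball (x i) (R i))" for F :: "nat set" and x R
      using m that by blast
    show ?thesis by (rule that[OF \<open>c1 > 0\<close> mm])
  qed
  define c where "c = c0 / (2 * 4 powr t)"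
  have cpos: "c > 0" using c0 by (simp add: c_def)
  have bound: "ennreal c \<le> (\<Sum>i. hcontent t (U i))"
    if cov: "K \<subseteq> (\<Union>i. U i)" and bdd: "\<And>i. bounded (U i)" for U :: "nat \<Rightarrow> real set"
  proof -
    define h where "h i = (if U i = {} then 0 else if diameter (U i) = 0 then 0 else diameter (U i) powr t)" for i
    have h_nonneg: "h i \<ge> 0" for i by (simp add: h_def)
    have hc: "hcontent t (U i) = ennreal (h i)" for i
      using t by (simp add: hcontent_def h_def)
    define \<epsilon> where "\<epsilon> i = c0 / 2 * (1/2)^(Suc i)" for i
    have \<epsilon>pos: "\<epsilon> i > 0" for i using c0 by (simp add: \<epsilon>_def)
    define x where "x i = (SOME z. z \<in> U i)" for i
    define R where "R i = (if diameter (U i) > 0 then 2 * diameter (U i) else (\<epsilon> i) powr (1/t) / 2)" for i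
    have Rpos: "R i > 0" for i using \<epsilon>pos[of i] by (simp add: R_def)
    have diam0: "diameter (U i) \<ge> 0" for i by (rule diameter_ge_0[OF bdd])
    define F' where "F' = {i. U i \<noteq> {}}"
    have covB: "K \<subseteq> (\<Union>i\<in>F'. ball (x i) (R i))"
    proof
      fix y assume "y \<in> K"
      then obtain i where yi: "y \<in> U i" using cov by blast
      then have ne: "U i \<noteq> {}" by blast
      then have xi: "x i \<in> U i" unfolding x_def by (simp add: some_in_eq)
      have "dist (x i) y \<le> diameter (U i)" by (rule diameter_bounded_bound[OF bdd xi yi])
      also have "\<dots> < R i" using \<epsilon>pos[of i] diam0[of i] by (auto simp: R_def)
      finally have "y \<in> ball (x i) (R i)" by simp
      then show "y \<in> (\<Union>i\<in>F'. ball (x i) (R i))" using ne by (auto simp: F'_def)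
    qed
    obtain F where F: "F \<subseteq> F'" "finite F" "K \<subseteq> (\<Union>i\<in>F. ball (x i) (R i))"
      by (rule compactE_image[OF K(1) _ covB]) auto
    have "c0 \<le> (\<Sum>i\<in>F. (2 * R i) powr t)" by (rule main[OF F(2) Rpos F(3)])
    also have "\<dots> \<le> (\<Sum>i\<in>F. 4 powr t * h i + \<epsilon> i)"
    proof (rule sum_mono)
      fix i assume "i \<in> F"
      then have ne: "U i \<noteq> {}" using F(1) by (auto simp: F'_def)
      show "(2 * R i) powr t \<le> 4 powr t * h i + \<epsilon> i"
      proof (cases "diameter (U i) > 0")
        case True
        then have "(2 * R i) powr t = 4 powr t * h i"
          using ne by (simp add: R_def h_def powr_mult)
        then show ?thesis using \<epsilon>pos[of i] by simp
      next
        case False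
        then have "(2 * R i) powr t = \<epsilon> i"
          using \<epsilon>pos[of i] t by (simp add: R_def powr_powr)
        then show ?thesis using h_nonneg[of i] by simp
      qed
    qed
    also have "\<dots> = 4 powr t * (\<Sum>i\<in>F. h i) + (\<Sum>i\<in>F. \<epsilon> i)"
      by (simp add: sum.distrib sum_distrib_left)
    also have "(\<Sum>i\<in>F. \<epsilon> i) = c0 / 2 * (\<Sum>i\<in>F. (1/2::real)^(Suc i))"
      by (simp add: \<epsilon>_def sum_distrib_left)
    also have "\<dots> \<le> c0 / 2 * 1" using geo_sum_le[OF F(2)] c0 by (intro mult_left_mono) auto
    finally have "c0 / 2 \<le> 4 powr t * (\<Sum>i\<in>F. h i)" by simp
    then have "c \<le> (\<Sum>i\<in>F. h i)" unfolding c_def by (simp add: field_simps)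
    then have "ennreal c \<le> ennreal (\<Sum>i\<in>F. h i)" by (rule ennreal_leI)
    also have "\<dots> = (\<Sum>i\<in>F. ennreal (h i))" using h_nonneg by (simp add: sum_ennreal)
    also have "\<dots> \<le> (\<Sum>i. ennreal (h i))" by (rule sum_le_suminf[OF summableI F(2)]) simp
    also have "\<dots> = (\<Sum>i. hcontent t (U i))" by (simp add: hc)
    finally show ?thesis .
  qed
  have "ennreal c \<le> hausdorff_delta t \<delta> K" for \<delta>
    unfolding hausdorff_delta_def by (rule INF_greatest) (use bound in auto)
  then show ?thesis using cpos by blast
qed

lemma hm_pos: "hausdorff_measure t K > 0"
proof -
  obtain c where c: "c > 0" "\<And>\<delta>. ennreal c \<le> hausdorff_delta t \<delta> K" using hd_lower by blast
  have "ennreal c \<le> hausdorff_delta t 1 K" by (rule c(2))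
  also have "\<dots> \<le> hausdorff_measure t K" unfolding hausdorff_measure_def
    by (rule SUP_upper) simp
  finally show ?thesis using c(1) by (metis ennreal_less_zero_iff order_less_le_trans)
qed

end



lemma hcontent_mono_exp:
  assumes "0 \<le> t" "t < t'" "bounded U" "diameter U \<le> 1"
  shows "hcontent t' U \<le> hcontent t U"
proof (cases "U = {}")
  case True then show ?thesis by (simp add: hcontent_def)
next
  case False
  show ?thesis
  proof (cases "diameter U = 0")
    case True then show ?thesis using assms by (simp add: hcontent_def)
  next
    case False
    have d0: "diameter U > 0" using False diameter_ge_0[OF assms(3)] by simp
    have "diameter U powr t' \<le> diameter U powr t"
      using assms d0 by (intro powr_mono') auto
    then show ?thesis using False \<open>U \<noteq> {}\<close> assms by (simp add: hcontent_def ennreal_leI)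
  qed
qed

lemma hdelta_mono_exp:
  assumes "0 \<le> t" "t < t'" "\<delta> \<le> 1"
  shows "hausdorff_delta t' \<delta> A \<le> hausdorff_delta t \<delta> A"
  unfolding hausdorff_delta_def
proof (rule INF_mono)
  fix U assume U: "U \<in> {U :: nat \<Rightarrow> real set. A \<subseteq> (\<Union>i. U i) \<and> (\<forall>i. bounded (U i) \<and> diameter (U i) \<le> \<delta>)}"
  have "(\<Sum>i. hcontent t' (U i)) \<le> (\<Sum>i. hcontent t (U i))"
  proof (rule suminf_le)
    fix i show "hcontent t' (U i) \<le> hcontent t (U i)"
      using U assms by (intro hcontent_mono_exp) (auto intro: order_trans)
  qed (auto intro: summableI)
  then show "\<exists>V\<in>{U :: nat \<Rightarrow> real set. A \<subseteq> (\<Union>i. U i) \<and> (\<forall>i. bounded (U i) \<and> diameter (U i) \<le> \<delta>)}.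
      (\<Sum>i. hcontent t' (V i)) \<le> (\<Sum>i. hcontent t (U i))" using U by blast
qed

lemma hdelta_anti:
  assumes "\<delta>1 \<le> \<delta>2"
  shows "hausdorff_delta s \<delta>2 A \<le> hausdorff_delta s \<delta>1 A"
  unfolding hausdorff_delta_def
  by (rule INF_superset_mono) (use assms in \<open>auto intro: order_trans\<close>)

lemma hm_zero_iff: "hausdorff_measure s A = 0 \<longleftrightarrow> (\<forall>\<delta>>0. hausdorff_delta s \<delta> A = 0)"
  unfolding hausdorff_measure_def
  by (simp add: SUP_eq_iff) (metis bot.extremum_uniqueI greaterThan_iff SUP_upper)

lemma hm_mono_exp:
  assumes "0 \<le> t" "t < t'" "hausdorff_measure t A = 0"
  shows "hausdorff_measure t' A = 0"
proof -
  have z: "hausdorff_delta t \<delta> A = 0" if "\<delta> > 0" for \<delta> using assms(3) that hm_zero_iff by blast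
  have "hausdorff_delta t' \<delta> A = 0" if "\<delta> > 0" for \<delta>
  proof -
    have "hausdorff_delta t' \<delta> A \<le> hausdorff_delta t' (min \<delta> 1) A" by (rule hdelta_anti) simp
    also have "\<dots> \<le> hausdorff_delta t (min \<delta> 1) A" using assms by (intro hdelta_mono_exp) auto
    also have "\<dots> = 0" using that by (intro z) simp
    finally show ?thesis by simp
  qed
  then show ?thesis using hm_zero_iff by blast
qed



locale fr =
  fixes p q r h a :: real and S :: "nat \<Rightarrow> real \<Rightarrow> real" and K :: "real set"
  assumes p: "0 < p" "p < 1/36" and q: "0 < q" "q < 1/36" and r: "0 < r" "r < 1/36"
    and h: "h = 8/15" and a: "a = 3/15"
    and S1: "S 1 = (\<lambda>x. p * x)" and S2: "S 2 = (\<lambda>x. a + r * x)" and S3: "S 3 = (\<lambda>x. h - q * x)"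
    and S4: "S 4 = (\<lambda>x. h - r + r * x)" and S5: "S 5 = (\<lambda>x. 1 - a - r * x)"
    and S6: "S 6 = (\<lambda>x. 1 - r + r * x)"
    and att: "is_attractor S {1..6} K"
    and touch: "S 3 ` K \<inter> S 4 ` K = {h}"
begin

definition rr :: "nat \<Rightarrow> real" where "rr i = (if i = 1 then p else if i = 3 then q else r)"

lemma K: "K \<noteq> {}" "compact K" "K = (\<Union>i\<in>{1..6}. S i ` K)"
  using att unfolding is_attractor_def by auto

lemma six: "i \<in> {1..6} \<longleftrightarrow> i = 1 \<or> i = 2 \<or> i = 3 \<or> i = 4 \<or> i = 5 \<or> i = (6::nat)"
  by auto

lemma rr_b: "i \<in> {1..6} \<Longrightarrow> 0 < rr i \<and> rr i \<le> 1/36"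
  using p q r by (auto simp: rr_def)

lemma simS: "i \<in> {1..6} \<Longrightarrow> \<bar>S i x - S i y\<bar> = rr i * \<bar>x - y\<bar>"
proof -
  assume "i \<in> {1..6}"
  then consider "i=1" | "i=2" | "i=3" | "i=4" | "i=5" | "i=6" unfolding six by blast
  then show ?thesis
  proof cases
    case 1 then show ?thesis using p unfolding 1 S1 rr_def by (simp add: abs_mult flip: right_diff_distrib)
  next
    case 2 then show ?thesis using r unfolding 2 S2 rr_def by (simp add: abs_mult flip: right_diff_distrib)
  next
    case 3
    have "h - q * x - (h - q * y) = q * (y - x)" by (simp add: algebra_simps)
    then show ?thesis using q unfolding 3 S3 rr_def by (simp add:  abs_mult abs_minus_commute)
  next
    case 4
    have "h - r + r * x - (h - r + r * y) = r * (x - y)" by (simp add: algebra_simps)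
    then show ?thesis using r unfolding 4 S4 rr_def by (simp add:  abs_mult)
  next
    case 5
    have "1 - a - r * x - (1 - a - r * y) = r * (y - x)" by (simp add: algebra_simps)
    then show ?thesis using r unfolding 5 S5 rr_def by (simp add:  abs_mult abs_minus_commute)
  next
    case 6
    have "1 - r + r * x - (1 - r + r * y) = r * (x - y)" by (simp add: algebra_simps)
    then show ?thesis using r unfolding 6 S6 rr_def by (simp add:  abs_mult)
  qed
qed

lemma centre: "i \<in> {1..6} \<Longrightarrow> \<bar>y - 1/2\<bar> \<le> B \<Longrightarrow> \<bar>S i y - 1/2\<bar> \<le> (1 - rr i)/2 + rr i * B"
proof -
  assume i: "i \<in> {1..6}" and yB: "\<bar>y - 1/2\<bar> \<le> B"
  have rp: "0 \<le> rr i" using rr_b[OF i] by simp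
  have ub: "rr i * (y - 1/2) \<le> rr i * B" using yB rp by (intro mult_left_mono) (auto simp: abs_le_iff)
  have "rr i * (-B) \<le> rr i * (y - 1/2)" using yB rp by (intro mult_left_mono) (auto simp: abs_le_iff)
  then have lb: "- (rr i * B) \<le> rr i * (y - 1/2)" by simp
  have e: "rr i * (y - 1/2) = rr i * y - rr i / 2" by (simp add: algebra_simps)
  from i consider "i=1" | "i=2" | "i=3" | "i=4" | "i=5" | "i=6" unfolding six by blast
  then show ?thesis
  proof cases
    case 1
    have ri: "rr i = p" unfolding 1 rr_def by simp
    have Si: "S i y = p * y" unfolding 1 S1 by simp
    show ?thesis using ub lb e unfolding ri Si abs_le_iff using p by (intro conjI) (simp_all add: field_simps)
  next
    case 2
    have ri: "rr i = r" unfolding 2 rr_def by simp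
    have Si: "S i y = a + r * y" unfolding 2 S2 by simp
    show ?thesis using ub lb e unfolding ri Si abs_le_iff using r a by (intro conjI) (simp_all add: field_simps)
  next
    case 3
    have ri: "rr i = q" unfolding 3 rr_def by simp
    have Si: "S i y = h - q * y" unfolding 3 S3 by simp
    show ?thesis using ub lb e unfolding ri Si abs_le_iff using q h by (intro conjI) (simp_all add: field_simps)
  next
    case 4
    have ri: "rr i = r" unfolding 4 rr_def by simp
    have Si: "S i y = h - r + r * y" unfolding 4 S4 by simp
    show ?thesis using ub lb e unfolding ri Si abs_le_iff using r h by (intro conjI) (simp_all add: field_simps)
  next
    case 5
    have ri: "rr i = r" unfolding 5 rr_def by simp
    have Si: "S i y = 1 - a - r * y" unfolding 5 S5 by simp
    show ?thesis using ub lb e unfolding ri Si abs_le_iff using r a by (intro conjI) (simp_all add: field_simps)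
  next
    case 6
    have ri: "rr i = r" unfolding 6 rr_def by simp
    have Si: "S i y = 1 - r + r * y" unfolding 6 S6 by simp
    show ?thesis using ub lb e unfolding ri Si abs_le_iff using r by (intro conjI) (simp_all add: field_simps)
  qed
qed

lemma K01: "K \<subseteq> {0..1}"
proof -
  have cK: "compact ((\<lambda>x. \<bar>x - 1/2\<bar>) ` K)"
    by (rule compact_continuous_image[OF _ K(2)]) (intro continuous_intros)
  obtain B where "B \<in> (\<lambda>x. \<bar>x - 1/2\<bar>) ` K" "\<forall>z\<in>(\<lambda>x. \<bar>x - 1/2\<bar>) ` K. z \<le> B"
    using compact_attains_sup[OF cK] K(1) by blast
  then obtain x0 where x0: "x0 \<in> K" "B = \<bar>x0 - 1/2\<bar>" and Bm: "\<And>x. x \<in> K \<Longrightarrow> \<bar>x - 1/2\<bar> \<le> B" by auto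
  have "x0 \<in> (\<Union>i\<in>{1..6}. S i ` K)" using x0(1) K(3) by blast
  then obtain i y where i: "i \<in> {1..6}" and y: "y \<in> K" "x0 = S i y" by blast
  have "B \<le> (1 - rr i)/2 + rr i * B" using centre[OF i Bm[OF y(1)]] x0(2) y(2) by simp
  moreover have "(1 - rr i) * B = B - rr i * B" "(1 - rr i) * (1/2) = 1/2 - rr i / 2" by (simp_all add: algebra_simps)
  ultimately have "(1 - rr i) * B \<le> (1 - rr i) * (1/2)" by linarith
  then have B: "B \<le> 1/2" using rr_b[OF i] by (simp add: mult_le_cancel_left)
  show ?thesis
  proof
    fix x assume "x \<in> K" then have "\<bar>x - 1/2\<bar> \<le> 1/2" using Bm B by fastforce
    then show "x \<in> {0..1}" unfolding atLeastAtMost_iff abs_le_iff by linarith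
  qed
qed


definition reg :: "real \<Rightarrow> nat" where
  "reg z = (if z < 1/10 then 1 else if z < 3/10 then 2 else if z < 6/10 then 3 else if z < 9/10 then 5 else 6)"

definition cls :: "nat \<Rightarrow> nat" where "cls i = (if i = 4 then 3 else i)"

lemma reg_S: assumes i: "i \<in> {1..6}" and y: "y \<in> {0..1}" shows "reg (S i y) = cls i"
proof -
  have y0: "0 \<le> y" "y \<le> 1" using y by auto
  have b1: "0 \<le> c * y" if "0 < c" for c :: real using that y0 by simp
  have b2: "c * y \<le> c" if "0 < c" for c :: real using that y0 by (simp add: mult_left_le)
  note bp = b1[OF p(1)] b2[OF p(1)] and bq = b1[OF q(1)] b2[OF q(1)] and br = b1[OF r(1)] b2[OF r(1)]
  from i consider "i=1" | "i=2" | "i=3" | "i=4" | "i=5" | "i=6" unfolding six by blast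
  then show ?thesis
  proof cases
    case 1
    have "S i y = p * y" unfolding 1 S1 by simp
    then have "S i y < 1/10" using bp p by linarith
    then show ?thesis using 1 by (simp add: reg_def cls_def)
  next
    case 2
    have "S i y = a + r * y" unfolding 2 S2 by simp
    then have "1/10 \<le> S i y" "S i y < 3/10" using br r a by linarith+
    then show ?thesis using 2 by (simp add: reg_def cls_def)
  next
    case 3
    have "S i y = h - q * y" unfolding 3 S3 by simp
    then have "3/10 \<le> S i y" "S i y < 6/10" using bq q h by linarith+
    then show ?thesis using 3 by (simp add: reg_def cls_def)
  next
    case 4
    have "S i y = h - r + r * y" unfolding 4 S4 by simp
    then have "3/10 \<le> S i y" "S i y < 6/10" using br r h by linarith+
    then show ?thesis using 4 by (simp add: reg_def cls_def)
  next
    case 5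
    have "S i y = 1 - a - r * y" unfolding 5 S5 by simp
    then have "6/10 \<le> S i y" "S i y < 9/10" using br r a by linarith+
    then show ?thesis using 5 by (simp add: reg_def cls_def)
  next
    case 6
    have "S i y = 1 - r + r * y" unfolding 6 S6 by simp
    then have "9/10 \<le> S i y" using br r by linarith
    then show ?thesis using 6 by (simp add: reg_def cls_def)
  qed
qed

lemma SK: "i \<in> {1..6} \<Longrightarrow> S i ` K \<subseteq> K"
  using K(3) by blast

lemma S_disj:
  assumes "i \<in> {1..6}" "j \<in> {1..6}" "cls i \<noteq> cls j" "A \<subseteq> {0..1}" "B \<subseteq> {0..1}"
  shows "S i ` A \<inter> S j ` B = {}"
proof -
  have "z \<notin> S j ` B" if zA: "z \<in> S i ` A" for z
  proof
    assume "z \<in> S j ` B"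
    then obtain y2 where "y2 \<in> B" "z = S j y2" by blast
    moreover obtain y1 where "y1 \<in> A" "z = S i y1" using zA by blast
    ultimately have y12: "y1 \<in> {0..1}" "y2 \<in> {0..1}" "S i y1 = S j y2" using assms(4,5) by auto
    have "cls i = reg (S i y1)" using reg_S[OF assms(1) y12(1)] by simp
    also have "\<dots> = reg (S j y2)" using y12(3) by simp
    also have "\<dots> = cls j" using reg_S[OF assms(2) y12(2)] by simp
    finally have "cls i = cls j" .
    then show False using assms(3) by simp
  qed
  then show ?thesis by blast
qed

lemma S_inj: "i \<in> {1..6} \<Longrightarrow> inj (S i)"
proof (rule injI)
  fix x y assume i: "i \<in> {1..6}" and "S i x = S i y"
  then have "rr i * \<bar>x - y\<bar> = 0" using simS[OF i, of x y] by simp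
  then show "x = y" using rr_b[OF i] by simp
qed

lemma twK: "set u \<subseteq> {1..6} \<Longrightarrow> tw S u ` K \<subseteq> K"
  by (rule tw_inv[OF SK])

lemma zero_addr: "set u \<subseteq> {1..6} \<Longrightarrow> 0 \<in> tw S u ` K \<Longrightarrow> u = replicate (length u) 1"
proof (induction u)
  case Nil then show ?case by simp
next
  case (Cons i u)
  then have i: "i \<in> {1..6}" and u: "set u \<subseteq> {1..6}" by auto
  from Cons.prems(2) obtain x where x: "x \<in> K" "0 = S i (tw S u x)" by auto
  define z where "z = tw S u x"
  have z: "z \<in> tw S u ` K" "0 = S i z" using x by (auto simp: z_def)
  have z01: "z \<in> {0..1}" using z(1) twK[OF u] K01 by blast
  have "reg 0 = cls i" using reg_S[OF i z01] z(2) by simp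
  then have "cls i = 1" by (simp add: reg_def)
  then have i1: "i = 1" by (auto simp: cls_def split: if_splits)
  then have "p * z = 0" using z(2) S1 by simp
  then have "z = 0" using p by simp
  then have "u = replicate (length u) 1" using Cons.IH[OF u] z(1) by simp
  then obtain k where k: "u = replicate k 1" by blast
  then show ?case using i1 by simp
qed

primrec G :: "nat \<Rightarrow> nat list set" where
  "G 0 = {[]}"
| "G (Suc n) = (\<lambda>(x,u). x#u) ` ({1,2,4,5,6} \<times> G n) \<union> (\<lambda>u. 3#u) ` (G n - {replicate n 1})"

lemma G_words: "G n \<subseteq> words {1..6} n"
proof (induction n)
  case 0 then show ?case by (simp add: words_def)
next
  case (Suc n)
  show ?case
  proof
    fix w assume "w \<in> G (Suc n)"
    then obtain x u where w: "w = x # u" "x \<in> {1..6}" "u \<in> G n" by auto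
    then have "u \<in> words {1..6} n" using Suc.IH by blast
    then show "w \<in> words {1..6} (Suc n)" using w by (simp add: words_def)
  qed
qed

lemma G_rep: "replicate n 1 \<in> G n"
  by (induction n) auto

lemma G_fin: "finite (G n)"
  by (induction n) auto

lemma G_Cons: "x # u \<in> G (Suc n) \<Longrightarrow> u \<in> G n \<and> x \<in> {1..6} \<and> (x = 3 \<longrightarrow> u \<noteq> replicate n 1)"
  by auto

lemma h_notin:
  assumes "set u \<subseteq> {1..6}" "u \<noteq> replicate (length u) 1"
  shows "h \<notin> S 3 ` (tw S u ` K)"
proof
  assume "h \<in> S 3 ` (tw S u ` K)"
  then obtain z where z: "z \<in> tw S u ` K" "h = S 3 z" by blast
  then have "q * z = 0" using S3 by simp
  then have "z = 0" using q by simp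
  then show False using zero_addr[OF assms(1)] z(1) assms(2) by simp
qed

lemma disj34:
  assumes "3 # u \<in> G (Suc n)" "v \<in> G n"
  shows "S 3 ` (tw S u ` K) \<inter> S 4 ` (tw S v ` K) = {}"
proof -
  have u: "u \<in> G n" "u \<noteq> replicate n 1" using G_Cons[OF assms(1)] by auto
  have "u \<in> words {1..6} n" "v \<in> words {1..6} n" using u(1) assms(2) G_words by blast+
  then have uw: "set u \<subseteq> {1..6}" "length u = n" and vw: "set v \<subseteq> {1..6}" by (simp_all add: words_def)
  have "S 3 ` (tw S u ` K) \<inter> S 4 ` (tw S v ` K) \<subseteq> S 3 ` K \<inter> S 4 ` K"
    using twK[OF uw(1)] twK[OF vw] by blast
  also have "\<dots> = {h}" by (rule touch)
  finally show ?thesis using h_notin[OF uw(1)] u(2) uw(2) by blast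
qed

lemma G_disj: "u \<in> G n \<Longrightarrow> v \<in> G n \<Longrightarrow> u \<noteq> v \<Longrightarrow> tw S u ` K \<inter> tw S v ` K = {}"
proof (induction n arbitrary: u v)
  case 0 then show ?case by simp
next
  case (Suc n)
  have "u \<in> words {1..6} (Suc n)" "v \<in> words {1..6} (Suc n)" using Suc.prems(1,2) G_words by blast+
  then have lu: "length u = Suc n" and lv: "length v = Suc n" by (simp_all add: words_def)
  then obtain x u' y v' where uu: "u = x # u'" and vv: "v = y # v'" by (metis length_Suc_conv)
  have cu: "u' \<in> G n" "x \<in> {1..6}" using G_Cons Suc.prems(1) uu by blast+
  have cv: "v' \<in> G n" "y \<in> {1..6}" using G_Cons Suc.prems(2) vv by blast+
  have "u' \<in> words {1..6} n" "v' \<in> words {1..6} n" using cu(1) cv(1) G_words by blast+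
  then have su: "set u' \<subseteq> {1..6}" and sv: "set v' \<subseteq> {1..6}" by (simp_all add: words_def)
  have A: "tw S u' ` K \<subseteq> {0..1}" and B: "tw S v' ` K \<subseteq> {0..1}" using twK[OF su] twK[OF sv] K01 by auto
  have eu: "tw S u ` K = S x ` (tw S u' ` K)" and ev: "tw S v ` K = S y ` (tw S v' ` K)"
    unfolding uu vv by (auto simp: image_comp)
  show ?case
  proof (cases "x = y")
    case True
    then have "u' \<noteq> v'" using Suc.prems(3) uu vv by simp
    then have "tw S u' ` K \<inter> tw S v' ` K = {}" using Suc.IH cu(1) cv(1) by blast
    then show ?thesis unfolding eu ev True using S_inj[OF cv(2)] by (simp add: image_Int[symmetric])
  next
    case False
    show ?thesis
    proof (cases "cls x = cls y")
      case False
      then show ?thesis unfolding eu ev by (rule S_disj[OF cu(2) cv(2) _ A B])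
    next
      case True
      then have "(x = 3 \<and> y = 4) \<or> (x = 4 \<and> y = 3)" using \<open>x \<noteq> y\<close> by (auto simp: cls_def split: if_splits)
      then show ?thesis
      proof
        assume xy: "x = 3 \<and> y = 4"
        then show ?thesis unfolding eu ev using disj34[of u' n v'] Suc.prems(1) uu cv(1) by simp
      next
        assume xy: "x = 4 \<and> y = 3"
        then show ?thesis unfolding eu ev using disj34[of v' n u'] Suc.prems(2) vv cu(1) by blast
      qed
    qed
  qed
qed


definition lam :: "real \<Rightarrow> real" where "lam t = p powr t + q powr t + 4 * r powr t"

lemma rw_rr: "set w \<subseteq> {1..6} \<Longrightarrow> 0 < rw rr w \<and> rw rr w \<le> (1/36) ^ length w"
  by (rule rw_bounds) (use rr_b in auto)

lemma rw_powr: "set w \<subseteq> {1..6} \<Longrightarrow> rw rr w powr t = rw (\<lambda>i. rr i powr t) w"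
proof (induction w)
  case Nil then show ?case by simp
next
  case (Cons i w)
  then have i: "i \<in> {1..6}" and w: "set w \<subseteq> {1..6}" by auto
  have "rw rr (i # w) powr t = rr i powr t * rw rr w powr t"
    using rr_b[OF i] rw_rr[OF w] by (simp add: powr_mult)
  then show ?case using Cons.IH[OF w] by simp
qed

lemma sum16: "(\<Sum>i\<in>{1..6}. rr i powr t) = lam t"
proof -
  have e: "{1..6::nat} = {1,2,3,4,5,6}" by auto
  show ?thesis unfolding e lam_def by (simp add: rr_def)
qed

definition gs :: "real \<Rightarrow> nat \<Rightarrow> real" where "gs t n = (\<Sum>w\<in>G n. rw (\<lambda>i. rr i powr t) w)"

lemma gs_Suc: "gs t (Suc n) = lam t * gs t n - q powr t * (p powr t) ^ n"
proof -
  let ?f = "rw (\<lambda>i. rr i powr t)"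
  define A where "A = (\<lambda>(x,u). x#u) ` ({1,2,4,5,6::nat} \<times> G n)"
  define B where "B = (\<lambda>u. 3#u) ` (G n - {replicate n 1})"
  have disj: "A \<inter> B = {}" by (auto simp: A_def B_def)
  have fA: "finite A" "finite B" using G_fin by (auto simp: A_def B_def)
  have "gs t (Suc n) = sum ?f (A \<union> B)" unfolding gs_def G.simps A_def B_def ..
  also have "\<dots> = sum ?f A + sum ?f B" by (rule sum.union_disjoint[OF fA disj])
  also have "sum ?f A = (p powr t + 4 * r powr t) * gs t n"
  proof -
    have inj: "inj_on (\<lambda>(x,u). x#u) ({1,2,4,5,6::nat} \<times> G n)" by (auto simp: inj_on_def)
    have "sum ?f A = (\<Sum>(x,u)\<in>{1,2,4,5,6::nat} \<times> G n. rr x powr t * ?f u)"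
      unfolding A_def by (subst sum.reindex[OF inj]) (simp add: case_prod_unfold)
    also have "\<dots> = (\<Sum>x\<in>{1,2,4,5,6::nat}. \<Sum>u\<in>G n. rr x powr t * ?f u)"
      by (rule sum.cartesian_product[symmetric])
    also have "\<dots> = (\<Sum>x\<in>{1,2,4,5,6::nat}. rr x powr t) * gs t n"
      unfolding gs_def by (rule sum_product[symmetric])
    also have "(\<Sum>x\<in>{1,2,4,5,6::nat}. rr x powr t) = p powr t + 4 * r powr t"
      by (simp add: rr_def)
    finally show ?thesis .
  qed
  also have "sum ?f B = q powr t * (gs t n - (p powr t) ^ n)"
  proof -
    have inj: "inj_on (\<lambda>u. 3#u) (G n - {replicate n 1})" by (auto simp: inj_on_def)
    have "sum ?f B = (\<Sum>u\<in>G n - {replicate n 1}. q powr t * ?f u)"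
      unfolding B_def by (subst sum.reindex[OF inj]) (simp add: rr_def)
    also have "\<dots> = q powr t * (\<Sum>u\<in>G n - {replicate n 1}. ?f u)" by (simp add: sum_distrib_left)
    also have "(\<Sum>u\<in>G n - {replicate n 1}. ?f u) = gs t n - ?f (replicate n 1)"
      unfolding gs_def using sum_diff1[where a="replicate n 1" and f="?f" and A="G n"] G_fin[of n] G_rep[of n] by simp
    also have "?f (replicate n 1) = (p powr t) ^ n"
      by (simp add: rw_def rr_def map_replicate prod_list_replicate)
    finally show ?thesis .
  qed
  finally show ?thesis unfolding lam_def by (simp add: algebra_simps)
qed

lemma gs_closed:
  fixes t :: real
  defines "Bc \<equiv> q powr t / (q powr t + 4 * r powr t)"
  shows "gs t n = (1 - Bc) * lam t ^ n + Bc * (p powr t) ^ n"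
proof (induction n)
  case 0 then show ?case by (simp add: gs_def)
next
  case (Suc n)
  have pos: "q powr t + 4 * r powr t > 0" using q r by (simp add: add_pos_pos)
  have key: "lam t * Bc - q powr t = Bc * p powr t"
    using pos unfolding Bc_def lam_def by (simp add: field_simps)
  have "gs t (Suc n) = lam t * ((1 - Bc) * lam t ^ n + Bc * (p powr t) ^ n) - q powr t * (p powr t) ^ n"
    by (simp add: gs_Suc Suc.IH)
  also have "\<dots> = (1 - Bc) * lam t ^ Suc n + (lam t * Bc - q powr t) * (p powr t) ^ n"
    by (simp add: algebra_simps)
  also have "\<dots> = (1 - Bc) * lam t ^ Suc n + Bc * (p powr t) ^ Suc n"
    by (simp add: key)
  finally show ?case .
qed

lemma lower_main:
  assumes t: "0 < t" and l: "lam t > 1"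
  shows "hausdorff_measure t K > 0"
proof -
  define Bc where "Bc = q powr t / (q powr t + 4 * r powr t)"
  have pos: "q powr t + 4 * r powr t > 0" using q r by (simp add: add_pos_pos)
  have Bc0: "0 \<le> Bc" using q by (simp add: Bc_def)
  have c0: "1 - Bc > 0"
  proof -
    have "q powr t < q powr t + 4 * r powr t" using r by simp
    then have "Bc < 1" unfolding Bc_def using pos by simp
    then show ?thesis by simp
  qed
  obtain n0 where n0: "1 / (1 - Bc) < lam t ^ n0" using real_arch_pow[OF l] by blast
  define n where "n = Suc n0"
  have "lam t ^ n0 \<le> lam t ^ n" unfolding n_def using l by (intro power_increasing) auto
  then have "1 / (1 - Bc) < lam t ^ n" using n0 by linarith
  then have "1 < (1 - Bc) * lam t ^ n" using c0 by (simp add: field_simps)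
  moreover have "0 \<le> Bc * (p powr t) ^ n" using Bc0 by simp
  ultimately have gs1: "1 \<le> gs t n" unfolding gs_closed Bc_def[symmetric] by linarith
  interpret ss: ssep K "G n" "tw S" "rw rr" t
  proof
    show "compact K" "K \<noteq> {}" using K by auto
    show "finite (G n)" by (rule G_fin)
    show "G n \<noteq> {}" using G_rep by blast
    fix w assume w: "w \<in> G n"
    then have ww: "set w \<subseteq> {1..6}" "length w = n" using G_words by (auto simp: words_def)
    show "0 < rw rr w \<and> rw rr w < 1"
    proof -
      have "(1/36::real) ^ n < 1" unfolding n_def by (rule power_Suc_less_one) auto
      then show ?thesis using rw_rr[OF ww(1)] ww(2) by auto
    qed
    show "\<And>x y. \<bar>tw S w x - tw S w y\<bar> = rw rr w * \<bar>x - y\<bar>" by (rule tw_sim[OF simS ww(1)])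
    show "tw S w ` K \<subseteq> K" by (rule twK[OF ww(1)])
  next
    fix j k assume "j \<in> G n" "k \<in> G n" "j \<noteq> k"
    then show "tw S j ` K \<inter> tw S k ` K = {}" by (rule G_disj)
  next
    show "0 < t" by (rule t)
  next
    have "(\<Sum>j\<in>G n. rw rr j powr t) = gs t n"
      unfolding gs_def using G_words by (intro sum.cong refl rw_powr) (auto simp: words_def)
    then show "1 \<le> (\<Sum>j\<in>G n. rw rr j powr t)" using gs1 by simp
  qed
  show ?thesis by (rule ss.hm_pos)
qed


lemma Kcover: "K \<subseteq> (\<Union>w\<in>words {1..6} n. tw S w ` K)"
proof (induction n)
  case 0 then show ?case by (simp add: words_0)
next
  case (Suc n)
  show ?case
  proof
    fix x assume "x \<in> K"
    then obtain i y where i: "i \<in> {1..6}" and y: "y \<in> K" "x = S i y" using K(3) by blast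
    then obtain w where w: "w \<in> words {1..6} n" "y \<in> tw S w ` K" using Suc.IH by blast
    then obtain z where z: "z \<in> K" "y = tw S w z" by blast
    have "i # w \<in> words {1..6} (Suc n)" using w(1) i by (simp add: words_def)
    moreover have "x = tw S (i # w) z" using y z by simp
    ultimately show "x \<in> (\<Union>w\<in>words {1..6} (Suc n). tw S w ` K)" using z(1) by blast
  qed
qed

lemma upper:
  assumes t: "0 < t" and l: "lam t < 1"
  shows "hausdorff_measure t K = 0"
proof -
  define D where "D = diameter K"
  have bK: "bounded K" using K(2) by (rule compact_imp_bounded)
  have D: "\<bar>x - y\<bar> \<le> D" if "x \<in> K" "y \<in> K" for x y
    using diameter_bounded_bound[OF bK that] by (simp add: D_def dist_real_def)
  have D0: "0 \<le> D" unfolding D_def by (rule diameter_ge_0[OF bK])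
  have l0: "0 \<le> lam t" unfolding lam_def by simp
  have key: "hausdorff_delta t \<delta> K \<le> ennreal (D powr t * lam t ^ n)" if dn: "(1/36)^n * D \<le> \<delta>" for \<delta> n
  proof -
    define W where "W = words {1..6::nat} n"
    have fW: "finite W" unfolding W_def by (rule finite_words) simp
    obtain g where g: "bij_betw g {0..<card W} W" using ex_bij_betw_nat_finite[OF fW] by blast
    define U where "U i = (if i < card W then tw S (g i) ` K else {})" for i
    have gW: "g i \<in> W" if "i < card W" for i using g that by (auto simp: bij_betw_def)
    have Wset: "set w \<subseteq> {1..6}" "length w = n" if "w \<in> W" for w using that by (auto simp: W_def words_def)
    have diamw: "diameter (tw S w ` K) \<le> rw rr w * D" if "w \<in> W" for w
    proof (rule diameter_le)
      show "tw S w ` K \<noteq> {} \<or> 0 \<le> rw rr w * D" using K(1) by simp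
      fix x y assume "x \<in> tw S w ` K" "y \<in> tw S w ` K"
      then obtain x' y' where "x' \<in> K" "y' \<in> K" "x = tw S w x'" "y = tw S w y'" by blast
      then show "norm (x - y) \<le> rw rr w * D"
        using tw_sim[OF simS Wset(1)[OF that]] D rw_rr[OF Wset(1)[OF that]]
        by (simp add: mult_left_mono)
    qed
    have rwn: "rw rr w * D \<le> \<delta>" if "w \<in> W" for w
    proof -
      have "rw rr w * D \<le> (1/36)^n * D" using rw_rr[OF Wset(1)[OF that]] Wset(2)[OF that] D0
        by (intro mult_right_mono) auto
      then show ?thesis using dn by linarith
    qed
    have "0 \<le> (1/36::real)^n * D" using D0 by simp
    then have d0: "0 \<le> \<delta>" using dn by linarith
    have Ucov: "U \<in> {U :: nat \<Rightarrow> real set. K \<subseteq> (\<Union>i. U i) \<and> (\<forall>i. bounded (U i) \<and> diameter (U i) \<le> \<delta>)}"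
    proof (simp, intro conjI allI)
      show "K \<subseteq> (\<Union>i. U i)"
      proof
        fix x assume "x \<in> K"
        then obtain w where w: "w \<in> W" "x \<in> tw S w ` K" using Kcover[of n] by (auto simp: W_def)
        have "w \<in> g ` {0..<card W}" using g w(1) by (simp add: bij_betw_def)
        then obtain i where "i \<in> {0..<card W}" "g i = w" by (metis imageE)
        then have "i < card W" "g i = w" by auto
        then show "x \<in> (\<Union>i. U i)" using w by (auto simp: U_def)
      qed
      fix i
      show "bounded (U i)"
      proof (cases "i < card W")
        case True
        then have "U i \<subseteq> K" unfolding U_def using twK[OF Wset(1)[OF gW[OF True]]] by simp
        then show ?thesis by (rule bounded_subset[OF bK])
      qed (simp add: U_def)
      show "diameter (U i) \<le> \<delta>"
      proof (cases "i < card W")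
        case True
        then show ?thesis unfolding U_def using diamw[OF gW[OF True]] rwn[OF gW[OF True]] by simp
      qed (simp add: U_def d0)
    qed
    have "hausdorff_delta t \<delta> K \<le> (\<Sum>i. hcontent t (U i))"
      unfolding hausdorff_delta_def by (rule INF_lower[OF Ucov])
    also have "(\<Sum>i. hcontent t (U i)) = (\<Sum>i\<in>{0..<card W}. hcontent t (U i))"
      by (rule suminf_finite) (auto simp: U_def hcontent_def)
    also have "\<dots> \<le> (\<Sum>i\<in>{0..<card W}. ennreal ((rw rr (g i) * D) powr t))"
    proof (rule sum_mono)
      fix i assume "i \<in> {0..<card W}"
      then have i: "i < card W" by simp
      have "diameter (tw S (g i) ` K) powr t \<le> (rw rr (g i) * D) powr t"
        using diamw[OF gW[OF i]] t diameter_ge_0[OF bounded_subset[OF bK twK[OF Wset(1)[OF gW[OF i]]]]]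
        by (intro powr_mono2) auto
      then have "ennreal (diameter (tw S (g i) ` K) powr t) \<le> ennreal ((rw rr (g i) * D) powr t)"
        by (rule ennreal_leI)
      then show "hcontent t (U i) \<le> ennreal ((rw rr (g i) * D) powr t)"
        using i t unfolding U_def hcontent_def by simp
    qed
    also have "\<dots> = (\<Sum>w\<in>W. ennreal ((rw rr w * D) powr t))"
      by (rule sum.reindex_bij_betw[OF g])
    also have "\<dots> = ennreal (\<Sum>w\<in>W. (rw rr w * D) powr t)" by (rule sum_ennreal) simp
    also have "(\<Sum>w\<in>W. (rw rr w * D) powr t) = (\<Sum>w\<in>W. D powr t * rw (\<lambda>i. rr i powr t) w)"
    proof (rule sum.cong[OF refl])
      fix w assume w: "w \<in> W"
      have "(rw rr w * D) powr t = rw rr w powr t * D powr t"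
        using rw_rr[OF Wset(1)[OF w]] D0 by (simp add: powr_mult)
      then show "(rw rr w * D) powr t = D powr t * rw (\<lambda>i. rr i powr t) w"
        using rw_powr[OF Wset(1)[OF w]] by simp
    qed
    also have "\<dots> = D powr t * lam t ^ n"
      unfolding sum_distrib_left[symmetric] W_def rw_def sum_words[OF finite_atLeastAtMost] sum16 ..
    finally show ?thesis .
  qed
  have "hausdorff_delta t \<delta> K = 0" if d: "\<delta> > 0" for \<delta>
  proof -
    have "hausdorff_delta t \<delta> K \<le> 0 + ennreal e" if e: "e > 0" for e
    proof -
      have lim1: "(\<lambda>n. (1/36::real)^n * D) \<longlonglongrightarrow> 0"
        using tendsto_mult_left_zero[OF LIMSEQ_power_zero[of "1/36::real"], of D] by (simp add: mult.commute)
      have lim2: "(\<lambda>n. D powr t * lam t ^ n) \<longlonglongrightarrow> 0"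
      proof -
        have "norm (lam t) < 1" using l l0 by simp
        then have "(\<lambda>n. lam t ^ n) \<longlonglongrightarrow> 0" by (rule LIMSEQ_power_zero)
        then show ?thesis by (rule tendsto_mult_right_zero)
      qed
      have "eventually (\<lambda>n. (1/36::real)^n * D < \<delta>) sequentially" using order_tendstoD(2)[OF lim1 d] .
      moreover have "eventually (\<lambda>n. D powr t * lam t ^ n < e) sequentially" using order_tendstoD(2)[OF lim2 e] .
      ultimately have "eventually (\<lambda>n. (1/36::real)^n * D < \<delta> \<and> D powr t * lam t ^ n < e) sequentially"
        by (rule eventually_conj)
      then obtain n where n: "(1/36::real)^n * D < \<delta>" "D powr t * lam t ^ n < e"
        by (auto simp: eventually_sequentially)
      have "hausdorff_delta t \<delta> K \<le> ennreal (D powr t * lam t ^ n)" using key n(1) by simp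
      also have "\<dots> \<le> ennreal e" using n(2) by (intro ennreal_leI) simp
      finally show ?thesis by simp
    qed
    then have "hausdorff_delta t \<delta> K \<le> 0" by (rule ennreal_le_epsilon)
    then show ?thesis by simp
  qed
  then show ?thesis using hm_zero_iff by blast
qed


lemma lam_strict: "t1 < t2 \<Longrightarrow> lam t2 < lam t1"
proof -
  assume "t1 < t2"
  have "p powr t2 < p powr t1" using p \<open>t1 < t2\<close> by (intro powr_less_mono') auto
  moreover have "q powr t2 < q powr t1" using q \<open>t1 < t2\<close> by (intro powr_less_mono') auto
  moreover have "r powr t2 < r powr t1" using r \<open>t1 < t2\<close> by (intro powr_less_mono') auto
  ultimately show ?thesis unfolding lam_def by linarith
qed

lemma dim_eq: "lam (hausdorff_dim K) = 1"
proof -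
  have cont: "continuous_on {0..1} lam"
    unfolding lam_def using p q r by (intro continuous_intros) auto
  have l0: "lam 0 = 6" using p q r by (simp add: lam_def)
  have l1: "lam 1 \<le> 1" using p q r by (simp add: lam_def)
  obtain s where s: "0 \<le> s" "s \<le> 1" "lam s = 1"
    using IVT2'[of lam 1 1 0, OF l1 _ _ cont] l0 by auto
  have s0: "0 < s" using s l0 by (cases "s = 0") auto
  define Z where "Z = {t. 0 \<le> t \<and> hausdorff_measure t K = 0}"
  have gt: "t \<in> Z" if "s < t" for t
  proof -
    have "lam t < 1" using lam_strict[OF that] s(3) by simp
    then show ?thesis using upper[of t] that s0 by (simp add: Z_def)
  qed
  have pos: "hausdorff_measure t K \<noteq> 0" if "0 < t" "t < s" for t
  proof -
    have "lam t > 1" using lam_strict[OF that(2)] s(3) by simp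
    then show ?thesis using lower_main[OF that(1)] by simp
  qed
  have lt: "t \<notin> Z" if "t < s" for t
  proof
    assume tZ: "t \<in> Z"
    then have t0: "0 \<le> t" and ht: "hausdorff_measure t K = 0" by (auto simp: Z_def)
    define t' where "t' = max t (s/2)"
    have "t \<le> t'" "0 < t'" "t' < s" using that s0 by (auto simp: t'_def)
    moreover have "hausdorff_measure t' K = 0"
    proof (cases "t = t'")
      case True then show ?thesis using ht by simp
    next
      case False
      then have "t < t'" using \<open>t \<le> t'\<close> by simp
      then show ?thesis using hm_mono_exp[OF t0 _ ht] by simp
    qed
    ultimately show False using pos by blast
  qed
  have Zlow: "s \<le> z" if "z \<in> Z" for z using lt that by force
  have Zne: "Z \<noteq> {}" using gt[of "s+1"] by auto
  have bdd: "bdd_below Z" using Zlow by (auto simp: bdd_below_def)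
  have "s \<le> Inf Z" by (rule cInf_greatest[OF Zne Zlow])
  moreover have "Inf Z \<le> s"
  proof (rule field_le_epsilon)
    fix e :: real assume "0 < e"
    then have "s + e \<in> Z" by (intro gt) simp
    then show "Inf Z \<le> s + e" by (rule cInf_lower[OF _ bdd])
  qed
  ultimately have "Inf Z = s" by simp
  then have "hausdorff_dim K = s" unfolding hausdorff_dim_def Z_def by simp
  then show ?thesis using s(3) by simp
qed

end

theorem theorem5:
  fixes p q r h a :: real and S :: "nat \<Rightarrow> real \<Rightarrow> real" and K :: "real set"
  assumes "p \<in> {0<..<1/36}" and "q \<in> {0<..<1/36}" and "r \<in> {0<..<1/36}"
    and "h = 8/15" and "a = 3/15"
    and "S 1 = (\<lambda>x. p * x)" and "S 2 = (\<lambda>x. a + r * x)" and "S 3 = (\<lambda>x. h - q * x)"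
    and "S 4 = (\<lambda>x. h - r + r * x)" and "S 5 = (\<lambda>x. 1 - a - r * x)"
    and "S 6 = (\<lambda>x. 1 - r + r * x)"
    and "is_attractor S {1..6} K"
    and "S 3 ` K \<inter> S 4 ` K = {h}"
  shows "p powr (hausdorff_dim K) + q powr (hausdorff_dim K) + 4 * r powr (hausdorff_dim K) = 1"
proof -
  interpret fr p q r h a S K
    using assms by unfold_locales auto
  show ?thesis using dim_eq by (simp add: lam_def)
qed

end
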